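(* Let $\mathcal{A}$ be a central arrangement in $V=\mathbb{K}^\ell$, $H\in\mathcal{A}$, and let $M^p\subset\Omega^p(\mathcal{A}^H,\mathbf{k})$ be the image of $\mathbf{res}_H^p:\Omega^p(\mathcal{A})\to\Omega^p(\mathcal{A}^H,\mathbf{k})$. Then $$\sum_{p=0}^{\ell-1}P(M^p,x)\,y^p=\frac{x(1-x)}{x+y}\,\Phi(\mathcal{A};x,y),\qquad \Phi(\mathcal{A};x,y):=\sum_{p=0}^{\ell}P(\Omega^p(\mathcal{A}),x)\,y^p.$$
   Context: Notation as follows. $\mathbb{K}$ is a field of characteristic $0$, $S=\mathbb{K}[V^*]=\mathbb{K}[z_1,\dots,z_\ell]$ with $H=\{z_1=0\}$. For each hyperplane $H'$ fix a defining linear form $\alpha_{H'}$, $Q=\prod_{H'\in\mathcal{A}}\alpha_{H'}$, and $\Omega^p(\mathcal{A})=\{\omega\in\frac1Q\Omega^p_V: Q\frac{d\alpha_{H'}}{\alpha_{H'}}\wedge\omega\in\Omega^{p+1}_V\ \forall H'\in\mathcal{A}\}$. The restricted multiarrangement $(\mathcal{A}^H,\mathbf{k})$ on $H$ has hyperplanes $H'\cap H$ ($H'\ne H$) with multiplicity $\mathbf{k}(X)=\#\{H'\in\mathcal{A}\setminus\{H\}:H'\cap H=X\}$, and $\Omega^p(\mathcal{A}^H,\mathbf{k})=\{\omega\in\frac{1}{Q'}\Omega^p_H: Q'\frac{d\alpha_X}{\alpha_X^{\mathbf{k}(X)}}\wedge\omega\in\Omega^{p+1}_H\ \forall X\}$,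 $Q'=\prod_X\alpha_X^{\mathbf{k}(X)}$. Every $\omega\in\Omega^p(\mathcal{A})$ is uniquely $\omega_1+\frac{dz_1}{z_1}\wedge\omega_2$ with $\omega_1,\omega_2$ involving only $dz_2,\dots,dz_\ell$, and $\mathbf{res}^p_H(\omega)=\omega_1|_H$; $M^p$ is a graded $\mathbb{K}[H]=S/z_1S$-module. Grading convention: $\deg z_i=1$, $\deg dz_i=0$ (so e.g. $\frac1Q\Omega^\ell_V$ has lowest degree $-\#\mathcal{A}$). For a finitely generated graded module $M$, the Hilbert series is $P(M,x)=\sum_{p\in\mathbb{Z}}(\dim_\mathbb{K}M_p)x^p\in\mathbb{Z}[x^{-1}][[x]]$. *)

theory Defs
  imports "HOL-Library.Poly_Mapping" "HOL-Library.Function_Algebras"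
    "HOL-Computational_Algebra.Polynomial"
    "HOL-Computational_Algebra.Formal_Laurent_Series"
begin

text \<open>The coordinate z_1 of the paper is the variable with index 0, z_i has index i-1.
  A linear form on V = K^l is given by its coefficient vector a :: nat => K
  (with a i = 0 for i >= l).\<close>

type_synonym 'a mpoly = "(nat \<Rightarrow>\<^sub>0 nat) \<Rightarrow>\<^sub>0 'a"

definition const_poly :: "'a::comm_ring_1 \<Rightarrow> 'a mpoly" where
  "const_poly c = Poly_Mapping.single 0 c"

definition var_poly :: "nat \<Rightarrow> 'a::comm_ring_1 mpoly" where
  "var_poly i = Poly_Mapping.single (Poly_Mapping.single i 1) 1"

definition lform :: "nat \<Rightarrow> (nat \<Rightarrow> 'a::comm_ring_1) \<Rightarrow> 'a mpoly" where
  "lform l a = (\<Sum>i<l. const_poly (a i) * var_poly i)"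

definition poly_in_vars :: "nat set \<Rightarrow> 'a::zero mpoly \<Rightarrow> bool" where
  "poly_in_vars V f \<longleftrightarrow> (\<forall>m\<in>Poly_Mapping.keys f. Poly_Mapping.keys m \<subseteq> V)"

definition homog :: "int \<Rightarrow> 'a::zero mpoly \<Rightarrow> bool" where
  "homog d f \<longleftrightarrow> (\<forall>m\<in>Poly_Mapping.keys f. int (\<Sum>i\<in>Poly_Mapping.keys m. Poly_Mapping.lookup m i) = d)"

text \<open>A rational p-form in (1/Q) Omega^p_V is written (1/Q) * sum_I f_I dz_I, the sum over
  increasing p-subsets I of the coordinate indices; it is represented by its numerator family
  f :: nat set => 'a mpoly (f I = 0 unless I is a p-subset of {..<l}).
  The coefficient of dz_J (J a (p+1)-subset, in increasing order) of the form
  d(alpha_a) /\ (sum_I f_I dz_I) is the following.\<close>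
definition dwedge_coeff :: "(nat \<Rightarrow> 'a::comm_ring_1) \<Rightarrow> (nat set \<Rightarrow> 'a mpoly) \<Rightarrow> nat set \<Rightarrow> 'a mpoly" where
  "dwedge_coeff a f J =
     (\<Sum>j\<in>J. const_poly ((-1) ^ card {i\<in>J. i < j} * a j) * f (J - {j}))"

text \<open>Degree-n homogeneous part of Omega^p(A), A given by a finite set of defining linear forms,
  Q the product of them.  omega = (1/Q) sum f_I dz_I has degree n iff every f_I is homogeneous of
  degree n + |A|.  The condition Q (d alpha / alpha) /\ omega in Omega^{p+1}_V is
  (1/alpha) d alpha /\ sum f_I dz_I polynomial, i.e. alpha divides every coefficient.\<close>
definition OmegaA_deg :: "nat \<Rightarrow> (nat \<Rightarrow> 'a::field) set \<Rightarrow> nat \<Rightarrow> int \<Rightarrow> (nat set \<Rightarrow> 'a mpoly) set" where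
  "OmegaA_deg l A p n =
    {f. (\<forall>I. f I \<noteq> 0 \<longrightarrow> I \<subseteq> {..<l} \<and> card I = p)
      \<and> (\<forall>I. poly_in_vars {..<l} (f I) \<and> homog (n + int (card A)) (f I))
      \<and> (\<forall>a\<in>A. \<forall>J. J \<subseteq> {..<l} \<and> card J = Suc p \<longrightarrow> lform l a dvd dwedge_coeff a f J)}"

definition poly_quot :: "'a::comm_ring_1 mpoly \<Rightarrow> 'a mpoly \<Rightarrow> 'a mpoly" where
  "poly_quot g q = (THE r. g = q * r)"

text \<open>Restriction of a polynomial to H = {z_1 = 0}: set z_1 := 0; the result is a polynomial
  in z_2..z_l, i.e. an element of K[H].\<close>
definition restrict_H :: "'a::zero mpoly \<Rightarrow> 'a mpoly" where
  "restrict_H g = Abs_poly_mapping (\<lambda>m. if Poly_Mapping.lookup m 0 = 0 then Poly_Mapping.lookup g m else 0)"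

text \<open>Residue res_H^p for H = {alpha_h = 0}, alpha_h = c z_1.  For omega = (1/Q) sum f_I dz_I in
  Omega^p(A), omega_1 = (1/Q) sum_{0 \<notin> I} f_I dz_I = (1/(Q/alpha_h)) sum_{0 \<notin> I} (f_I/alpha_h) dz_I,
  so res_H omega = omega_1|_H = (1/Q_H) sum_{0 \<notin> I} (f_I/alpha_h)|_H dz_I with the fixed
  denominator Q_H = prod_{a in A - {h}} alpha_a|_H.  We represent res_H omega by this numerator
  family.\<close>
definition res_H :: "(nat \<Rightarrow> 'a::field) \<Rightarrow> nat \<Rightarrow> (nat set \<Rightarrow> 'a mpoly) \<Rightarrow> (nat set \<Rightarrow> 'a mpoly)" where
  "res_H h l f = (\<lambda>I. if 0 \<in> I then 0 else restrict_H (poly_quot (f I) (lform l h)))"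

text \<open>Degree-n part of M^p = res_H^p(Omega^p(A)) (res_H is homogeneous of degree 0).\<close>
definition M_deg :: "nat \<Rightarrow> (nat \<Rightarrow> 'a::field) set \<Rightarrow> (nat \<Rightarrow> 'a) \<Rightarrow> nat \<Rightarrow> int \<Rightarrow> (nat set \<Rightarrow> 'a mpoly) set" where
  "M_deg l A h p n = res_H h l ` OmegaA_deg l A p n"

definition form_scale :: "'a::field \<Rightarrow> (nat set \<Rightarrow> 'a mpoly) \<Rightarrow> (nat set \<Rightarrow> 'a mpoly)" where
  "form_scale c f = (\<lambda>I. const_poly c * f I)"

definition dimK :: "(nat set \<Rightarrow> 'a::field mpoly) set \<Rightarrow> nat" where
  "dimK W = vector_space.dim form_scale W"

definition hilbert_series :: "(int \<Rightarrow> nat) \<Rightarrow> int fls" where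
  "hilbert_series d = Abs_fls (\<lambda>n. int (d n))"

definition central_arrangement :: "nat \<Rightarrow> (nat \<Rightarrow> 'a::field) set \<Rightarrow> bool" where
  "central_arrangement l A \<longleftrightarrow> finite A
     \<and> (\<forall>a\<in>A. a \<noteq> (\<lambda>_. 0) \<and> (\<forall>i\<ge>l. a i = 0))
     \<and> (\<forall>a\<in>A. \<forall>b\<in>A. (\<exists>c. b = (\<lambda>i. c * a i)) \<longrightarrow> a = b)"

end

theory Submission
  imports Defs "HOL-Library.FuncSet"
begin

abbreviation lk where "lk \<equiv> Poly_Mapping.lookup"
abbreviation ks where "ks \<equiv> Poly_Mapping.keys"
abbreviation sgl where "sgl \<equiv> Poly_Mapping.single"

lemma lookup_single_mult:
  fixes g :: "('k::cancel_comm_monoid_add) \<Rightarrow>\<^sub>0 ('b::comm_semiring_1)"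
  shows "lk (sgl k a * g) m = (if \<exists>q. m = k + q then a * lk g (m - k) else 0)"
proof -
  have "lk (sgl k a * g) m = (\<Sum>l. (a when k = l) * (\<Sum>q. lk g q when m = l + q))"
    by (simp add: lookup_mult lookup_single)
  also have "\<dots> = a * (\<Sum>q. lk g q when m = k + q)"
    by (simp add: when_mult)
  also have "(\<Sum>q. lk g q when m = k + q) = (if \<exists>q. m = k + q then lk g (m - k) else 0)"
  proof (cases "\<exists>q. m = k + q")
    case True
    then obtain q0 where q0: "m = k + q0" by blast
    have "(\<Sum>q. lk g q when m = k + q) = (\<Sum>q. lk g q when q = q0)"
      by (rule Sum_any.cong) (auto simp: q0 when_def)
    also have "\<dots> = lk g q0" by simp
    finally show ?thesis using True q0 by simp
  next
    case False
    then show ?thesis by (auto simp: when_def)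
  qed
  finally show ?thesis by simp
qed

type_synonym mon = "nat \<Rightarrow>\<^sub>0 nat"

definition e0 :: mon where "e0 = sgl 0 1"

lemma const_poly_add: "const_poly (a + b) = const_poly a + (const_poly b :: 'a::comm_ring_1 mpoly)"
  by (simp add: const_poly_def single_add)
lemma const_poly_mult: "const_poly (a * b) = const_poly a * (const_poly b :: 'a::comm_ring_1 mpoly)"
  by (simp add: const_poly_def mult_single)
lemma const_poly_one[simp]: "const_poly 1 = (1 :: 'a::comm_ring_1 mpoly)"
  by (simp add: const_poly_def)
lemma const_poly_zero[simp]: "const_poly 0 = (0 :: 'a::comm_ring_1 mpoly)"
  by (simp add: const_poly_def)
lemma const_poly_uminus: "const_poly (- a) = - (const_poly a :: 'a::comm_ring_1 mpoly)"
  by (simp add: const_poly_def single_uminus)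
lemma const_poly_power: "const_poly (a ^ n) = (const_poly a :: 'a::comm_ring_1 mpoly) ^ n"
  by (induction n) (simp_all add: const_poly_mult)
lemma const_poly_inj: "const_poly a = (const_poly b :: 'a::comm_ring_1 mpoly) \<longleftrightarrow> a = b"
  unfolding const_poly_def by (metis lookup_single_eq)

lemma lookup_const_mult: "lk (const_poly c * (p :: 'a::comm_ring_1 mpoly)) m = c * lk p m"
  by (simp add: const_poly_def lookup_single_mult)

lemma e0_dvd_iff: "(\<exists>q. m = e0 + q) \<longleftrightarrow> lk m 0 \<noteq> 0"
proof
  assume "\<exists>q. m = e0 + q" then show "lk m 0 \<noteq> 0" by (auto simp: e0_def lookup_add)
next
  assume a: "lk m 0 \<noteq> 0"
  have "m = e0 + (m - e0)"
    using a by (simp add: poly_mapping_eq_iff fun_eq_iff lookup_add lookup_minus e0_def lookup_single when_def)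
  then show "\<exists>q. m = e0 + q" by blast
qed

lemma var0_eq: "var_poly 0 = sgl e0 1"
  by (simp add: var_poly_def e0_def)

lemma lookup_z1_mult:
  "lk (var_poly 0 * (r :: 'a::comm_ring_1 mpoly)) m = (if lk m 0 = 0 then 0 else lk r (m - e0))"
  using e0_dvd_iff[of m] by (simp add: var0_eq lookup_single_mult)

lemma lookup_z1_mult_shift:
  "lk (var_poly 0 * (r :: 'a::comm_ring_1 mpoly)) (m + e0) = lk r m"
  by (simp add: lookup_z1_mult lookup_add e0_def)

lemma lookup_restrict_H:
  "lk (restrict_H g) m = (if lk m 0 = 0 then lk g m else 0)"
proof -
  have "finite {m. (if lk m 0 = 0 then lk g m else 0) \<noteq> 0}"
    by (rule finite_subset[OF _ finite_keys[of g]]) (auto simp: in_keys_iff)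
  then show ?thesis by (simp add: restrict_H_def)
qed

definition shiftH :: "'a::zero mpoly \<Rightarrow> 'a mpoly" where
  "shiftH g = Abs_poly_mapping (\<lambda>m. lk g (m + e0))"

lemma lookup_shiftH: "lk (shiftH g) m = lk g (m + e0)"
proof -
  have "{m. lk g (m + e0) \<noteq> 0} = (\<lambda>m. m + e0) -` ks g" by (auto simp: in_keys_iff)
  moreover have "finite ((\<lambda>m. m + e0) -` ks g)"
    by (rule finite_vimageI) (auto simp: inj_def)
  ultimately show ?thesis by (simp add: shiftH_def)
qed

lemma decomp_H: "(g :: 'a::comm_ring_1 mpoly) = var_poly 0 * shiftH g + restrict_H g"
proof -
  have "lk g m = lk (var_poly 0 * shiftH g + restrict_H g) m" for m
  proof (cases "lk m 0 = 0")
    case True then show ?thesis by (simp add: lookup_add lookup_z1_mult lookup_restrict_H)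
  next
    case False
    have "m - e0 + e0 = m" using False
      by (simp add: poly_mapping_eq_iff fun_eq_iff lookup_add lookup_minus e0_def lookup_single when_def)
    then show ?thesis using False by (simp add: lookup_add lookup_z1_mult lookup_restrict_H lookup_shiftH)
  qed
  then show ?thesis by (simp add: poly_mapping_eq_iff fun_eq_iff)
qed

lemma restrict_H_z1_mult[simp]: "restrict_H (var_poly 0 * (r :: 'a::comm_ring_1 mpoly)) = 0"
  by (simp add: poly_mapping_eq_iff fun_eq_iff lookup_restrict_H lookup_z1_mult)

lemma restrict_H_add: "restrict_H (f + g) = restrict_H f + (restrict_H g :: 'a::comm_ring_1 mpoly)"
  by (simp add: poly_mapping_eq_iff fun_eq_iff lookup_restrict_H lookup_add)

lemma restrict_H_zero[simp]: "restrict_H (0 :: 'a::comm_ring_1 mpoly) = 0"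
  by (simp add: poly_mapping_eq_iff fun_eq_iff lookup_restrict_H)

lemma restrict_H_const_mult: "restrict_H (const_poly c * f) = const_poly c * (restrict_H f :: 'a::comm_ring_1 mpoly)"
  by (simp add: poly_mapping_eq_iff fun_eq_iff lookup_restrict_H lookup_const_mult)

lemma z1_dvd_iff: "var_poly 0 dvd (g :: 'a::comm_ring_1 mpoly) \<longleftrightarrow> restrict_H g = 0"
proof
  assume "var_poly 0 dvd g" then obtain r where "g = var_poly 0 * r" by (auto elim: dvdE)
  then show "restrict_H g = 0" by simp
next
  assume "restrict_H g = 0"
  then have "g = var_poly 0 * shiftH g" using decomp_H[of g] by simp
  then show "var_poly 0 dvd g" by (metis dvd_triv_left)
qed

definition z1free :: "'a::zero mpoly \<Rightarrow> bool" where
  "z1free p \<longleftrightarrow> (\<forall>m\<in>ks p. lk m 0 = 0)"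

lemma z1free_restrict: "z1free p \<Longrightarrow> restrict_H p = p"
proof -
  assume a: "z1free p"
  have "lk (restrict_H p) m = lk p m" for m
    using a by (cases "lk m 0 = 0") (auto simp: lookup_restrict_H z1free_def, metis in_keys_iff less_irrefl)
  then show ?thesis by (simp add: poly_mapping_eq_iff fun_eq_iff)
qed

lemma z1free_mult: "z1free p \<Longrightarrow> z1free q \<Longrightarrow> z1free (p * (q::'a::comm_ring_1 mpoly))"
  unfolding z1free_def using keys_mult[of p q] by (fastforce simp: lookup_add)

lemma z1free_restrict_H: "z1free (restrict_H p)"
  by (auto simp: z1free_def in_keys_iff lookup_restrict_H split: if_splits)


lemma lookup_var: "lk (var_poly i :: 'a::comm_ring_1 mpoly) m = (if m = sgl i 1 then 1 else 0)"
  by (simp add: var_poly_def lookup_single when_def)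

lemma var_nonzero[simp]: "var_poly i \<noteq> (0::'a::comm_ring_1 mpoly)"
  unfolding var_poly_def by (metis lookup_single_eq one_neq_zero lookup_zero)

lemma single_1_eq_iff: "(sgl i (1::nat) = sgl j 1) \<longleftrightarrow> i = j"
  by (metis lookup_single_eq lookup_single_not_eq one_neq_zero)
lemma single_1_eq_iff': "(sgl i (Suc 0) = sgl j (Suc 0)) \<longleftrightarrow> i = j"
  using single_1_eq_iff by simp

lemma z1free_zero[simp]: "z1free 0" by (simp add: z1free_def)

lemma z1free_const_mult: "z1free p \<Longrightarrow> z1free (const_poly c * (p :: 'a::comm_ring_1 mpoly))"
  by (auto simp: z1free_def in_keys_iff lookup_const_mult)

lemma z1free_add: "z1free p \<Longrightarrow> z1free q \<Longrightarrow> z1free (p + (q :: 'a::comm_ring_1 mpoly))"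
  using keys_add[of p q] by (auto simp: z1free_def)

lemma z1free_sum: "(\<And>i. i \<in> S \<Longrightarrow> z1free (f i)) \<Longrightarrow> z1free (sum f S :: 'a::comm_ring_1 mpoly)"
  by (induction S rule: infinite_finite_induct) (auto intro: z1free_add)

lemma z1free_var: "i \<noteq> 0 \<Longrightarrow> z1free (var_poly i :: 'a::comm_ring_1 mpoly)"
  by (simp add: z1free_def var_poly_def lookup_single)

lemma lform_split:
  assumes "0 < l"
  shows "lform l a = const_poly (a 0) * var_poly 0 + (\<Sum>i\<in>{1..<l}. const_poly (a i) * var_poly i)"
proof -
  have "lform l a = (\<Sum>i\<in>{0..<l}. const_poly (a i) * var_poly i)"
    by (simp add: lform_def atLeast0LessThan)
  also have "\<dots> = const_poly (a 0) * var_poly 0 + (\<Sum>i\<in>{Suc 0..<l}. const_poly (a i) * var_poly i)"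
    using assms by (simp add: sum.atLeast_Suc_lessThan)
  finally show ?thesis by simp
qed

lemma lform_h:
  assumes "0 < l"
  shows "lform l (\<lambda>i. if i = 0 then c else 0) = const_poly c * (var_poly 0 :: 'a::comm_ring_1 mpoly)"
  using lform_split[OF assms, of "\<lambda>i. if i = 0 then c else 0"] by simp

lemma coprime_lform:
  fixes X :: "'a::field mpoly"
  assumes l: "0 < l" and i0: "i0 \<in> {1..<l}" "a i0 \<noteq> 0"
    and d: "lform l a dvd var_poly 0 * X"
  shows "lform l a dvd X"
proof -
  define \<beta> where "\<beta> = (\<Sum>i\<in>{1..<l}. const_poly (a i) * (var_poly i :: 'a mpoly))"
  have al: "lform l a = const_poly (a 0) * var_poly 0 + \<beta>"
    using lform_split[OF l] by (simp add: \<beta>_def)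
  have bfree: "z1free \<beta>" unfolding \<beta>_def
    by (rule z1free_sum) (auto intro!: z1free_const_mult z1free_var)
  have ee: "(\<Sum>x\<in>{1..<l}. a x * (if i0 = x then 1 else 0)) = a i0"
  proof -
    have "(\<Sum>x\<in>{1..<l}. a x * (if i0 = x then 1 else 0)) = (\<Sum>x\<in>{1..<l}. if i0 = x then a x else 0)"
      by (rule sum.cong) auto
    also have "\<dots> = a i0" using i0 by simp
    finally show ?thesis .
  qed
  have "lk \<beta> (sgl i0 1) = a i0"
    using i0 ee by (simp add: \<beta>_def lookup_sum lookup_const_mult lookup_var single_1_eq_iff')
  then have "\<beta> \<noteq> 0" using i0 by auto
  from d obtain Y where Y: "var_poly 0 * X = lform l a * Y" by (auto elim: dvdE)
  define S R where "S = shiftH Y" and "R = restrict_H Y"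
  have YSR: "Y = var_poly 0 * S + R" using decomp_H[of Y] by (simp add: S_def R_def)
  have Rfree: "z1free R" by (simp add: R_def z1free_restrict_H)
  have "\<beta> * R = var_poly 0 * (X - lform l a * S - const_poly (a 0) * R)"
    using Y unfolding YSR al by (simp add: algebra_simps)
  then have "restrict_H (\<beta> * R) = 0" by simp
  moreover have "restrict_H (\<beta> * R) = \<beta> * R"
    by (rule z1free_restrict) (rule z1free_mult[OF bfree Rfree])
  ultimately have "R = 0" using \<open>\<beta> \<noteq> 0\<close> by simp
  then have "var_poly 0 * X = var_poly 0 * (lform l a * S)" using Y YSR by (simp add: algebra_simps)
  then have "X = lform l a * S" by simp
  then show ?thesis by simp
qed

definition mdeg :: "mon \<Rightarrow> nat" where "mdeg m = (\<Sum>i\<in>ks m. lk m i)"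

lemma mdeg_add: "mdeg (m + n) = mdeg m + mdeg n"
  unfolding mdeg_def by (rule setsum_keys_plus_distrib[where f = "\<lambda>k x. x"]) auto

lemma mdeg_single: "mdeg (sgl i 1) = 1"
proof -
  have "ks (sgl i (1::nat)) = {i}" by simp
  then show ?thesis by (simp add: mdeg_def)
qed
lemma mdeg_single'[simp]: "mdeg (sgl i (Suc 0)) = Suc 0"
  using mdeg_single by simp
lemma mdeg_zero[simp]: "mdeg 0 = 0" by (simp add: mdeg_def)
lemma mdeg_e0: "mdeg e0 = 1" by (simp add: e0_def mdeg_single)

lemma homog_iff: "homog d f \<longleftrightarrow> (\<forall>m\<in>ks f. int (mdeg m) = d)"
  by (simp add: homog_def mdeg_def)

lemma homog_zero[simp]: "homog d 0" by (simp add: homog_iff)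

lemma homog_add: "homog d f \<Longrightarrow> homog d g \<Longrightarrow> homog d (f + (g :: 'a::comm_ring_1 mpoly))"
  using keys_add[of f g] by (auto simp: homog_iff)

lemma homog_uminus: "homog d f \<Longrightarrow> homog d (- (f :: 'a::comm_ring_1 mpoly))"
  by (auto simp: homog_iff)

lemma homog_diff: "homog d f \<Longrightarrow> homog d g \<Longrightarrow> homog d (f - (g :: 'a::comm_ring_1 mpoly))"
  using homog_add[of d f "- g"] homog_uminus[of d g] by simp

lemma homog_sum: "(\<And>i. i \<in> S \<Longrightarrow> homog d (f i)) \<Longrightarrow> homog d (sum f S :: 'a::comm_ring_1 mpoly)"
  by (induction S rule: infinite_finite_induct) (auto intro: homog_add)

lemma homog_const_mult: "homog d f \<Longrightarrow> homog d (const_poly c * (f :: 'a::comm_ring_1 mpoly))"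
  by (auto simp: homog_iff in_keys_iff lookup_const_mult)

lemma homog_mult: "homog d1 f \<Longrightarrow> homog d2 g \<Longrightarrow> homog (d1 + d2) (f * (g :: 'a::comm_ring_1 mpoly))"
  using keys_mult[of f g] by (fastforce simp: homog_iff mdeg_add)

lemma homog_var: "homog 1 (var_poly i :: 'a::comm_ring_1 mpoly)"
  by (simp add: homog_iff var_poly_def mdeg_single)

lemma homog_var_mult: "homog d f \<Longrightarrow> homog (d + 1) (var_poly i * (f :: 'a::comm_ring_1 mpoly))"
proof -
  assume "homog d f"
  from homog_mult[OF homog_var[of i] this] show ?thesis by (simp add: add.commute)
qed

lemma homog_z1_quot: "homog d (var_poly 0 * (r :: 'a::comm_ring_1 mpoly)) \<Longrightarrow> homog (d - 1) r"
proof -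
  assume a: "homog d (var_poly 0 * r)"
  show ?thesis unfolding homog_iff
  proof
    fix m assume "m \<in> ks r"
    then have "m + e0 \<in> ks (var_poly 0 * r)" by (simp add: in_keys_iff lookup_z1_mult_shift)
    with a have "int (mdeg (m + e0)) = d" by (simp add: homog_iff)
    then show "int (mdeg m) = d - 1" by (simp add: mdeg_add mdeg_e0)
  qed
qed

lemma homog_restrict: "homog d g \<Longrightarrow> homog d (restrict_H (g :: 'a::comm_ring_1 mpoly))"
  by (auto simp: homog_iff in_keys_iff lookup_restrict_H split: if_splits)

lemma homog_neg: "d < 0 \<Longrightarrow> homog d f \<Longrightarrow> f = 0"
  by (auto simp: homog_iff)

lemma piv_zero[simp]: "poly_in_vars V 0" by (simp add: poly_in_vars_def)

lemma piv_add: "poly_in_vars V f \<Longrightarrow> poly_in_vars V g \<Longrightarrow> poly_in_vars V (f + (g :: 'a::comm_ring_1 mpoly))"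
  using keys_add[of f g] by (auto simp: poly_in_vars_def)

lemma piv_uminus: "poly_in_vars V f \<Longrightarrow> poly_in_vars V (- (f :: 'a::comm_ring_1 mpoly))"
  by (auto simp: poly_in_vars_def)

lemma piv_diff: "poly_in_vars V f \<Longrightarrow> poly_in_vars V g \<Longrightarrow> poly_in_vars V (f - (g :: 'a::comm_ring_1 mpoly))"
  using piv_add[of V f "- g"] piv_uminus[of V g] by simp

lemma piv_sum: "(\<And>i. i \<in> S \<Longrightarrow> poly_in_vars V (f i)) \<Longrightarrow> poly_in_vars V (sum f S :: 'a::comm_ring_1 mpoly)"
  by (induction S rule: infinite_finite_induct) (auto intro: piv_add)

lemma piv_const_mult: "poly_in_vars V f \<Longrightarrow> poly_in_vars V (const_poly c * (f :: 'a::comm_ring_1 mpoly))"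
  by (auto simp: poly_in_vars_def in_keys_iff lookup_const_mult)

lemma keys_mon_add: "ks (m + n :: mon) = ks m \<union> ks n"
  by (auto simp: in_keys_iff lookup_add)

lemma piv_mult: "poly_in_vars V f \<Longrightarrow> poly_in_vars V g \<Longrightarrow> poly_in_vars V (f * (g :: 'a::comm_ring_1 mpoly))"
  using keys_mult[of f g] by (fastforce simp: poly_in_vars_def keys_mon_add)

lemma piv_var: "i \<in> V \<Longrightarrow> poly_in_vars V (var_poly i :: 'a::comm_ring_1 mpoly)"
  by (simp add: poly_in_vars_def var_poly_def)

lemma piv_z1_quot: "poly_in_vars V (var_poly 0 * (r :: 'a::comm_ring_1 mpoly)) \<Longrightarrow> poly_in_vars V r"
proof -
  assume a: "poly_in_vars V (var_poly 0 * r)"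
  show ?thesis unfolding poly_in_vars_def
  proof
    fix m assume "m \<in> ks r"
    then have "m + e0 \<in> ks (var_poly 0 * r)" by (simp add: in_keys_iff lookup_z1_mult_shift)
    with a have "ks (m + e0) \<subseteq> V" by (simp add: poly_in_vars_def)
    then show "ks m \<subseteq> V" by (simp add: keys_mon_add)
  qed
qed

lemma piv_restrict: "poly_in_vars V g \<Longrightarrow> poly_in_vars V (restrict_H (g :: 'a::comm_ring_1 mpoly))"
  by (auto simp: poly_in_vars_def in_keys_iff lookup_restrict_H split: if_splits)

context vector_space begin

lemma lin_sum_on:
  assumes S: "subspace S" and C: "finite C" "C \<subseteq> S"
    and add: "\<And>x y. x\<in>S \<Longrightarrow> y\<in>S \<Longrightarrow> f (x + y) = f x + f y"
    and sc: "\<And>c x. x\<in>S \<Longrightarrow> f (c *s x) = c *s (f x)"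
    and z: "f 0 = 0"
  shows "f (\<Sum>c\<in>C. u c *s c) = (\<Sum>c\<in>C. u c *s f c)"
  using C
proof (induction C rule: finite_induct)
  case empty then show ?case by (simp add: z)
next
  case (insert x F)
  have "(\<Sum>c\<in>F. u c *s c) \<in> S" using insert S by (auto intro!: subspace_sum subspace_scale)
  moreover have "u x *s x \<in> S" using insert S by (auto intro!: subspace_scale)
  ultimately show ?case using insert by (simp add: add sc)
qed

lemma rank_nullity_on:
  assumes S: "subspace S" and T: "finite T" "S \<subseteq> span T"
    and add: "\<And>x y. x\<in>S \<Longrightarrow> y\<in>S \<Longrightarrow> f (x + y) = f x + f y"
    and sc: "\<And>c x. x\<in>S \<Longrightarrow> f (c *s x) = c *s (f x)"
  shows "dim S = dim (f ` S) + dim {x\<in>S. f x = 0}"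
proof -
  define K where "K = {x\<in>S. f x = 0}"
  have z: "f 0 = 0" using sc[of 0 0] subspace_0[OF S] by simp
  obtain B where B: "B \<subseteq> K" "independent B" "K \<subseteq> span B"
    using maximal_independent_subset[of K] by blast
  have BS: "B \<subseteq> S" using B(1) by (auto simp: K_def)
  obtain C where C: "B \<subseteq> C" "C \<subseteq> S" "independent C" "S \<subseteq> span C"
    using maximal_independent_subset_extend[OF BS B(2)] by blast
  have finC: "finite C" using independent_span_bound[OF T(1) C(3)] C(2) T(2) by blast
  have finB: "finite B" using finC C(1) finite_subset by blast
  have dimS: "dim S = card C" using basis_card_eq_dim[OF C(2) C(4) C(3)] by simp
  have dimK: "dim K = card B" using basis_card_eq_dim[OF B(1) B(3) B(2)] by simp
  define D where "D = C - B"
  have finD: "finite D" using finC by (simp add: D_def)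
  have fB: "\<And>b. b \<in> B \<Longrightarrow> f b = 0" using B(1) by (auto simp: K_def)
  have CS: "\<And>c. c \<in> C \<Longrightarrow> c \<in> S" using C(2) by auto
  have inj: "inj_on f D"
  proof
    fix d1 d2 assume d: "d1 \<in> D" "d2 \<in> D" "f d1 = f d2"
    show "d1 = d2"
    proof (rule ccontr)
      assume ne: "d1 \<noteq> d2"
      have "f (d1 - d2) = 0"
        using add[of d2 "d1 - d2"] d CS subspace_diff[OF S, of d1 d2] by (auto simp: D_def)
      then have "d1 - d2 \<in> K" using d CS subspace_diff[OF S, of d1 d2] by (auto simp: K_def D_def)
      then have "d1 - d2 \<in> span B" using B(3) by auto
      then have "d1 - d2 \<in> span (C - {d1})" using span_mono[of B "C - {d1}"] C(1) d by (auto simp: D_def)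
      moreover have "d2 \<in> span (C - {d1})" using d ne by (auto simp: D_def intro: span_base)
      ultimately have "d2 + (d1 - d2) \<in> span (C - {d1})" by (rule span_add[rotated])
      then have "d1 \<in> span (C - {d1})" by simp
      then have "dependent C" using d by (auto simp: dependent_def D_def)
      then show False using C(3) by simp
    qed
  qed
  have indep: "independent (f ` D)"
  proof (rule independent_if_scalars_zero)
    show "finite (f ` D)" using finD by simp
  next
    fix g y assume g0: "(\<Sum>y\<in>f ` D. g y *s y) = 0" and y: "y \<in> f ` D"
    have "(\<Sum>y\<in>f ` D. g y *s y) = (\<Sum>d\<in>D. g (f d) *s f d)"
      using sum.reindex[OF inj] by simp
    also have "\<dots> = f (\<Sum>d\<in>D. g (f d) *s d)"
      by (rule lin_sum_on[OF S finD _ add sc z, symmetric]) (auto simp: D_def CS)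
    finally have fz: "f (\<Sum>d\<in>D. g (f d) *s d) = 0" using g0 by simp
    have "(\<Sum>d\<in>D. g (f d) *s d) \<in> S"
      by (rule subspace_sum[OF S]) (auto simp: D_def CS intro!: subspace_scale[OF S])
    then have "(\<Sum>d\<in>D. g (f d) *s d) \<in> span B" using fz B(3) by (auto simp: K_def)
    then obtain u where u: "(\<Sum>d\<in>D. g (f d) *s d) = (\<Sum>b\<in>B. u b *s b)"
      using span_finite[OF finB] by auto
    define w where "w = (\<lambda>c. if c \<in> D then g (f c) else - u c)"
    have Cdu: "C = D \<union> B" "D \<inter> B = {}" using C(1) by (auto simp: D_def)
    have "(\<Sum>c\<in>C. w c *s c) = (\<Sum>c\<in>D. w c *s c) + (\<Sum>c\<in>B. w c *s c)"
      unfolding Cdu(1) by (rule sum.union_disjoint[OF finD finB Cdu(2)])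
    also have "(\<Sum>c\<in>D. w c *s c) = (\<Sum>d\<in>D. g (f d) *s d)" by (simp add: w_def)
    also have "(\<Sum>c\<in>B. w c *s c) = (\<Sum>b\<in>B. (- u b) *s b)"
      using Cdu(2) by (intro sum.cong) (auto simp: w_def)
    also have "\<dots> = - (\<Sum>b\<in>B. u b *s b)" by (simp add: sum_negf)
    finally have "(\<Sum>c\<in>C. w c *s c) = 0" using u by simp
    then have "\<forall>c\<in>C. w c = 0" using C(3) dependent_finite[OF finC] by blast
    then obtain d where "d \<in> D" "y = f d" "g (f d) = 0" using y by (auto simp: w_def D_def)
    then show "g y = 0" by simp
  qed
  have span: "f ` S \<subseteq> span (f ` D)"
  proof
    fix y assume "y \<in> f ` S"
    then obtain x where x: "x \<in> S" "y = f x" by auto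
    then obtain u where u: "x = (\<Sum>c\<in>C. u c *s c)" using C(4) span_finite[OF finC] by auto
    have "f x = (\<Sum>c\<in>C. u c *s f c)"
      unfolding u by (rule lin_sum_on[OF S finC C(2) add sc z])
    also have "\<dots> = (\<Sum>c\<in>D. u c *s f c)"
      using C(1) fB finC by (intro sum.mono_neutral_right) (auto simp: D_def)
    also have "\<dots> \<in> span (f ` D)"
      by (intro span_sum span_scale span_base) auto
    finally show "y \<in> span (f ` D)" using x by simp
  qed
  have "f ` D \<subseteq> f ` S" using C(2) by (auto simp: D_def)
  then have "dim (f ` S) = card (f ` D)" using basis_card_eq_dim[OF _ span indep] by simp
  also have "\<dots> = card D" using card_image[OF inj] .
  also have "\<dots> = card C - card B" using finB C(1) by (simp add: D_def card_Diff_subset)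
  finally show ?thesis using dimS dimK K_def card_mono[OF finC C(1)] by simp
qed

end

type_synonym 'a fam = "nat set \<Rightarrow> 'a mpoly"

lemma vs_form_scale: "vector_space (form_scale :: 'a::field \<Rightarrow> 'a fam \<Rightarrow> 'a fam)"
  by unfold_locales (auto simp: form_scale_def fun_eq_iff const_poly_add const_poly_mult algebra_simps)

interpretation FS: vector_space "form_scale :: 'a::field \<Rightarrow> 'a fam \<Rightarrow> 'a fam"
  by (rule vs_form_scale)

lemma dimK_eq: "dimK W = FS.dim W"
  by (simp add: dimK_def)

lemma sum_fun_apply: "(sum f S) x = (\<Sum>i\<in>S. (f i x :: 'b::comm_monoid_add))"
  by (induction S rule: infinite_finite_induct) auto

lemma form_scale_apply: "form_scale k f I = const_poly k * f I"
  by (simp add: form_scale_def)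

lemma shiftH_z1[simp]: "shiftH (var_poly 0 * (r :: 'a::comm_ring_1 mpoly)) = r"
  by (simp add: poly_mapping_eq_iff fun_eq_iff lookup_shiftH lookup_z1_mult_shift)

lemma z1_shiftH: "var_poly 0 dvd (g :: 'a::comm_ring_1 mpoly) \<Longrightarrow> var_poly 0 * shiftH g = g"
  by (auto elim!: dvdE)

lemma shiftH_add: "shiftH (f + g) = shiftH f + (shiftH g :: 'a::comm_ring_1 mpoly)"
  by (simp add: poly_mapping_eq_iff fun_eq_iff lookup_shiftH lookup_add)

lemma shiftH_zero[simp]: "shiftH (0 :: 'a::comm_ring_1 mpoly) = 0"
  by (simp add: poly_mapping_eq_iff fun_eq_iff lookup_shiftH)

lemma shiftH_const_mult: "shiftH (const_poly k * f) = const_poly k * (shiftH f :: 'a::comm_ring_1 mpoly)"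
  by (simp add: poly_mapping_eq_iff fun_eq_iff lookup_shiftH lookup_const_mult)

lemma poly_quot_eq: "q \<noteq> 0 \<Longrightarrow> g = q * r \<Longrightarrow> poly_quot g q = (r :: 'a::idom mpoly)"
  unfolding poly_quot_def by (rule the_equality) auto

definition Mons :: "nat \<Rightarrow> int \<Rightarrow> mon set" where
  "Mons l d = {m. ks m \<subseteq> {..<l} \<and> int (mdeg m) = d}"

lemma lookup_le_mdeg: "lk m i \<le> mdeg m"
proof (cases "i \<in> ks m")
  case True
  then show ?thesis unfolding mdeg_def by (intro member_le_sum) auto
next
  case False then show ?thesis by (simp add: in_keys_iff)
qed

lemma finite_Mons: "finite (Mons l d)"
proof -
  let ?F = "\<lambda>m::mon. restrict (lk m) {..<l}"
  have "inj_on ?F (Mons l d)"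
  proof
    fix m n assume mn: "m \<in> Mons l d" "n \<in> Mons l d" "?F m = ?F n"
    have "lk m i = lk n i" for i
    proof (cases "i < l")
      case True then show ?thesis using mn(3) by (metis lessThan_iff restrict_apply')
    next
      case False then show ?thesis using mn(1,2) unfolding Mons_def
        by (metis (mono_tags, lifting) in_keys_iff lessThan_iff mem_Collect_eq subsetD)
    qed
    then show "m = n" by (simp add: poly_mapping_eq_iff fun_eq_iff)
  qed
  moreover have "?F ` Mons l d \<subseteq> PiE {..<l} (\<lambda>_. {0..nat d})"
  proof
    fix g assume "g \<in> ?F ` Mons l d"
    then obtain m where m: "m \<in> Mons l d" "g = ?F m" by auto
    have "lk m i \<le> nat d" for i using lookup_le_mdeg[of m i] m(1) by (auto simp: Mons_def)
    then show "g \<in> PiE {..<l} (\<lambda>_. {0..nat d})" using m(2) by auto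
  qed
  moreover have "finite (PiE {..<l} (\<lambda>_. {0..nat d}))" by (intro finite_PiE) auto
  ultimately show ?thesis using finite_imageD finite_subset by metis
qed

definition delta_fam :: "nat set \<Rightarrow> mon \<Rightarrow> 'a::comm_ring_1 fam" where
  "delta_fam I m = (\<lambda>J. if J = I then sgl m 1 else 0)"

lemma poly_expand:
  assumes "finite S" "ks p \<subseteq> S"
  shows "(\<Sum>m\<in>S. const_poly (lk p m) * sgl m 1) = (p :: 'a::comm_ring_1 mpoly)"
proof -
  have "lk (\<Sum>m\<in>S. const_poly (lk p m) * sgl m 1) k = lk p k" for k
  proof -
    have "lk (\<Sum>m\<in>S. const_poly (lk p m) * sgl m 1) k = (\<Sum>m\<in>S. lk p m * (if m = k then 1 else 0))"
      by (simp add: lookup_sum lookup_const_mult lookup_single when_def)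
    also have "\<dots> = (\<Sum>m\<in>S. if m = k then lk p m else 0)"
      by (rule sum.cong) auto
    also have "\<dots> = lk p k" using assms by (auto simp: in_keys_iff)
    finally show ?thesis .
  qed
  then show ?thesis by (simp add: poly_mapping_eq_iff fun_eq_iff)
qed

definition ambient :: "nat \<Rightarrow> int \<Rightarrow> 'a::comm_ring_1 fam set" where
  "ambient l d = {f. (\<forall>I. f I \<noteq> 0 \<longrightarrow> I \<subseteq> {..<l}) \<and> (\<forall>I. poly_in_vars {..<l} (f I) \<and> homog d (f I))}"

lemma ambient_span:
  "\<exists>T. finite T \<and> ambient l d \<subseteq> FS.span (T :: 'a::field fam set)"
proof (intro exI conjI)
  let ?T = "(\<lambda>(I, m). delta_fam I m :: 'a fam) ` (Pow {..<l} \<times> Mons l d)"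
  show "finite ?T" by (intro finite_imageI finite_cartesian_product finite_Mons) auto
  show "ambient l d \<subseteq> FS.span ?T"
  proof
    fix f :: "'a fam" assume f: "f \<in> ambient l d"
    have ks: "ks (f I) \<subseteq> Mons l d" for I
      using f by (auto simp: ambient_def Mons_def poly_in_vars_def homog_iff)
    have "f = (\<Sum>I\<in>Pow {..<l}. \<Sum>m\<in>Mons l d. form_scale (lk (f I) m) (delta_fam I m))"
    proof
      fix J
      have "(\<Sum>I\<in>Pow {..<l}. \<Sum>m\<in>Mons l d. form_scale (lk (f I) m) (delta_fam I m)) J
          = (\<Sum>I\<in>Pow {..<l}. \<Sum>m\<in>Mons l d. if J = I then const_poly (lk (f I) m) * sgl m 1 else 0)"
        by (simp add: sum_fun_apply form_scale_apply delta_fam_def if_distrib cong: if_cong)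
      also have "\<dots> = (\<Sum>I\<in>Pow {..<l}. if J = I then (\<Sum>m\<in>Mons l d. const_poly (lk (f I) m) * sgl m 1) else 0)"
        by (intro sum.cong) auto
      also have "\<dots> = (if J \<in> Pow {..<l} then (\<Sum>m\<in>Mons l d. const_poly (lk (f J) m) * sgl m 1) else 0)"
        by (simp add: sum.delta)
      also have "\<dots> = f J"
        using f poly_expand[OF finite_Mons ks[of J]] by (auto simp: ambient_def)
      finally show "f J = (\<Sum>I\<in>Pow {..<l}. \<Sum>m\<in>Mons l d. form_scale (lk (f I) m) (delta_fam I m)) J" by simp
    qed
    also have "\<dots> \<in> FS.span ?T"
      by (intro FS.span_sum FS.span_scale FS.span_base) auto
    finally show "f \<in> FS.span ?T" .
  qed
qed

definition sg :: "nat set \<Rightarrow> nat \<Rightarrow> 'a::comm_ring_1" where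
  "sg K i = (-1) ^ card {k\<in>K. k < i}"

definition iE :: "nat \<Rightarrow> 'a::comm_ring_1 fam \<Rightarrow> 'a fam" where
  "iE l f = (\<lambda>K. \<Sum>i\<in>{..<l} - K. const_poly (sg K i) * (var_poly i * f (insert i K)))"

abbreviation C where "C \<equiv> const_poly"

lemma dwedge_sg: "dwedge_coeff a f J = (\<Sum>j\<in>J. C (sg J j * a j) * f (J - {j}))"
  by (simp add: dwedge_coeff_def sg_def)

lemma sg_remove_same: "sg (J - {j}) j = sg J j"
  unfolding sg_def by (rule arg_cong[where f = "\<lambda>n. (-1) ^ n"]) (rule arg_cong[where f = card], auto)

lemma sg_insert_same: "sg (insert i J) i = sg J i"
  unfolding sg_def by (rule arg_cong[where f = "\<lambda>n. (-1) ^ n"]) (rule arg_cong[where f = card], auto)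

lemma sg_sq: "sg K i * sg K i = (1 :: 'a::comm_ring_1)"
  unfolding sg_def by (simp add: power_mult_distrib[symmetric])

lemma card_insert_less:
  assumes "finite J" "i \<notin> J"
  shows "card {k\<in>insert i J. k < j} = card {k\<in>J. k < j} + (if i < j then 1 else 0)"
proof (cases "i < j")
  case True
  then have "{k\<in>insert i J. k < j} = insert i {k\<in>J. k < j}" by auto
  then show ?thesis using assms True by simp
next
  case False
  then have "{k\<in>insert i J. k < j} = {k\<in>J. k < j}" by auto
  then show ?thesis using False by simp
qed

lemma sg_swap:
  assumes "finite J" "j \<in> J" "i \<notin> J"
  shows "sg J j * sg (J - {j}) i = - (sg J i * sg (insert i J) j :: 'a::comm_ring_1)"
proof -
  have ij: "i \<noteq> j" using assms by auto
  have c1: "card {k\<in>insert i J. k < j} = card {k\<in>J. k < j} + (if i < j then 1 else 0)"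
    using card_insert_less assms by blast
  have c2': "card {k\<in>insert j (J - {j}). k < i} = card {k\<in>J - {j}. k < i} + (if j < i then 1 else 0)"
    using assms by (intro card_insert_less) auto
  have eqJ: "insert j (J - {j}) = J" using assms by auto
  have c2: "card {k\<in>J. k < i} = card {k\<in>J - {j}. k < i} + (if j < i then 1 else 0)"
    using c2' unfolding eqJ .
  show ?thesis
    using ij unfolding sg_def c1 c2
    by (cases "i < j") (auto simp: power_add)
qed

lemma iE_dwedge:
  fixes f :: "'a::comm_ring_1 fam"
  assumes J: "finite J" "J \<subseteq> {..<l}"
  shows "dwedge_coeff a (iE l f) J = lform l a * f J - iE l (dwedge_coeff a f) J"
proof -
  define X where "X = (\<Sum>j\<in>J. \<Sum>i\<in>{..<l} - J. C (sg J j * a j * sg (J - {j}) i) * (var_poly i * f (insert i (J - {j}))))"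
  define Y where "Y = (\<Sum>i\<in>{..<l} - J. \<Sum>j\<in>J. C (sg J i * sg (insert i J) j * a j) * (var_poly i * f (insert i (J - {j}))))"
  have fin: "finite ({..<l} - J)" by simp
  have L: "dwedge_coeff a (iE l f) J = (\<Sum>j\<in>J. C (a j) * (var_poly j * f J)) + X"
  proof -
    have "dwedge_coeff a (iE l f) J = (\<Sum>j\<in>J. C (sg J j * a j) *
        (\<Sum>i\<in>{..<l} - (J - {j}). C (sg (J - {j}) i) * (var_poly i * f (insert i (J - {j})))))"
      by (simp add: dwedge_sg iE_def)
    also have "\<dots> = (\<Sum>j\<in>J. C (a j) * (var_poly j * f J) +
        (\<Sum>i\<in>{..<l} - J. C (sg J j * a j * sg (J - {j}) i) * (var_poly i * f (insert i (J - {j})))))"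
    proof (rule sum.cong[OF refl])
      fix j assume j: "j \<in> J"
      have e: "{..<l} - (J - {j}) = insert j ({..<l} - J)" using j J by auto
      have "(\<Sum>i\<in>{..<l} - (J - {j}). C (sg (J - {j}) i) * (var_poly i * f (insert i (J - {j}))))
          = C (sg (J - {j}) j) * (var_poly j * f (insert j (J - {j}))) +
            (\<Sum>i\<in>{..<l} - J. C (sg (J - {j}) i) * (var_poly i * f (insert i (J - {j}))))"
        unfolding e using j by (intro sum.insert) auto
      moreover have "insert j (J - {j}) = J" using j by auto
      moreover have "C (sg J j * a j) * (C (sg J j) * Z) = C (a j) * Z" for Z
      proof -
        have "sg J j * a j * sg J j = (sg J j * sg J j) * a j" by (simp add: ac_simps)
        then have "sg J j * a j * sg J j = a j" by (simp add: sg_sq)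
        then show ?thesis by (simp only: const_poly_mult[symmetric] mult.assoc[symmetric])
      qed
      moreover have "C (sg J j * a j) * (C (sg (J-{j}) i) * W) = C (sg J j * a j * sg (J-{j}) i) * W" for i W
        by (simp only: const_poly_mult mult.assoc)
      ultimately show "C (sg J j * a j) * (\<Sum>i\<in>{..<l} - (J - {j}). C (sg (J - {j}) i) * (var_poly i * f (insert i (J - {j})))) =
          C (a j) * (var_poly j * f J) + (\<Sum>i\<in>{..<l} - J. C (sg J j * a j * sg (J - {j}) i) * (var_poly i * f (insert i (J - {j}))))"
        by (simp add: sg_remove_same distrib_left sum_distrib_left)
    qed
    also have "\<dots> = (\<Sum>j\<in>J. C (a j) * (var_poly j * f J)) + X"
      by (simp add: sum.distrib X_def)
    finally show ?thesis .
  qed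
  have R: "iE l (dwedge_coeff a f) J = (\<Sum>i\<in>{..<l} - J. C (a i) * (var_poly i * f J)) + Y"
  proof -
    have "iE l (dwedge_coeff a f) J = (\<Sum>i\<in>{..<l} - J. C (sg J i) * (var_poly i *
          (\<Sum>j\<in>insert i J. C (sg (insert i J) j * a j) * f (insert i J - {j}))))"
      by (simp add: dwedge_sg iE_def)
    also have "\<dots> = (\<Sum>i\<in>{..<l} - J. C (a i) * (var_poly i * f J) +
          (\<Sum>j\<in>J. C (sg J i * sg (insert i J) j * a j) * (var_poly i * f (insert i (J - {j})))))"
    proof (rule sum.cong[OF refl])
      fix i assume i: "i \<in> {..<l} - J"
      have "(\<Sum>j\<in>insert i J. C (sg (insert i J) j * a j) * f (insert i J - {j}))
          = C (sg (insert i J) i * a i) * f (insert i J - {i}) + (\<Sum>j\<in>J. C (sg (insert i J) j * a j) * f (insert i J - {j}))"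
        using i J by (intro sum.insert) auto
      moreover have "insert i J - {i} = J" using i by auto
      moreover have "\<And>j. j \<in> J \<Longrightarrow> insert i J - {j} = insert i (J - {j})" using i by auto
      moreover have "C (sg J i) * C (sg J i * a i) = C (a i)"
        by (simp add: const_poly_mult[symmetric] algebra_simps sg_sq)
      ultimately show "C (sg J i) * (var_poly i * (\<Sum>j\<in>insert i J. C (sg (insert i J) j * a j) * f (insert i J - {j}))) =
          C (a i) * (var_poly i * f J) + (\<Sum>j\<in>J. C (sg J i * sg (insert i J) j * a j) * (var_poly i * f (insert i (J - {j}))))"
        using i by (simp add: sg_insert_same distrib_left sum_distrib_left const_poly_mult algebra_simps)
    qed
    also have "\<dots> = (\<Sum>i\<in>{..<l} - J. C (a i) * (var_poly i * f J)) + Y"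
      by (simp add: sum.distrib Y_def)
    finally show ?thesis .
  qed
  have XY: "X = - Y"
  proof -
    have "X = (\<Sum>i\<in>{..<l} - J. \<Sum>j\<in>J. C (sg J j * a j * sg (J - {j}) i) * (var_poly i * f (insert i (J - {j}))))"
      unfolding X_def by (rule sum.swap)
    also have "\<dots> = (\<Sum>i\<in>{..<l} - J. \<Sum>j\<in>J. - (C (sg J i * sg (insert i J) j * a j) * (var_poly i * f (insert i (J - {j})))))"
    proof (intro sum.cong refl)
      fix i j assume i: "i \<in> {..<l} - J" and j: "j \<in> J"
      have "sg J j * a j * sg (J - {j}) i = - (sg J i * sg (insert i J) j * a j)"
      proof -
        have "sg J j * sg (J - {j}) i = - (sg J i * sg (insert i J) j)"
          using sg_swap[OF J(1) j, of i] i by simp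
        then have "a j * (sg J j * sg (J - {j}) i) = - (a j * (sg J i * sg (insert i J) j))"
          by (metis mult_minus_right)
        then show ?thesis by (simp add: ac_simps)
      qed
      then show "C (sg J j * a j * sg (J - {j}) i) * (var_poly i * f (insert i (J - {j}))) =
          - (C (sg J i * sg (insert i J) j * a j) * (var_poly i * f (insert i (J - {j}))))"
        by (simp add: const_poly_uminus)
    qed
    also have "\<dots> = - Y" by (simp add: Y_def sum_negf)
    finally show ?thesis .
  qed
  have lf: "lform l a * f J = (\<Sum>j\<in>J. C (a j) * (var_poly j * f J)) + (\<Sum>i\<in>{..<l} - J. C (a i) * (var_poly i * f J))"
  proof -
    have "lform l a * f J = (\<Sum>i<l. C (a i) * (var_poly i * f J))"
      by (simp add: lform_def sum_distrib_right mult.assoc)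
    also have "\<dots> = (\<Sum>i\<in>J \<union> ({..<l} - J). C (a i) * (var_poly i * f J))"
      using J by (intro sum.cong) auto
    also have "\<dots> = (\<Sum>j\<in>J. C (a j) * (var_poly j * f J)) + (\<Sum>i\<in>{..<l} - J. C (a i) * (var_poly i * f J))"
      using J by (intro sum.union_disjoint) auto
    finally show ?thesis .
  qed
  show ?thesis using L R XY lf by simp
qed

definition zm :: "'a::comm_ring_1 fam \<Rightarrow> 'a fam" where "zm f = (\<lambda>I. var_poly 0 * f I)"
definition wH :: "'a::comm_ring_1 fam \<Rightarrow> 'a fam" where
  "wH g = (\<lambda>I. if 0 \<in> I then shiftH (g (I - {0})) else 0)"
definition resf :: "'a::field \<Rightarrow> 'a fam \<Rightarrow> 'a fam" where
  "resf c f = (\<lambda>I. if 0 \<in> I then 0 else C (1 / c) * restrict_H (shiftH (f I)))"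

lemma dwedge_add: "dwedge_coeff a (f + g) J = dwedge_coeff a f J + dwedge_coeff a g J"
  by (simp add: dwedge_coeff_def sum.distrib distrib_left)

lemma dwedge_mult_left: "dwedge_coeff a (\<lambda>I. q * f I) J = q * dwedge_coeff a f J"
  by (simp add: dwedge_coeff_def sum_distrib_left algebra_simps)

lemma dwedge_scale: "dwedge_coeff a (form_scale k f) J = C k * dwedge_coeff a f J"
  unfolding form_scale_def by (rule dwedge_mult_left)

lemma dwedge_zero: "dwedge_coeff a (\<lambda>_. 0) J = 0"
  by (simp add: dwedge_coeff_def)

lemma resf_add: "resf c (f + g) = resf c f + resf c g"
  by (simp add: resf_def fun_eq_iff shiftH_add restrict_H_add distrib_left)

lemma resf_scale: "resf c (form_scale k f) = form_scale k (resf c f)"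
  by (simp add: resf_def fun_eq_iff form_scale_def shiftH_const_mult restrict_H_const_mult algebra_simps)

lemma resf_zero[simp]: "resf c 0 = 0"
  by (simp add: resf_def fun_eq_iff)

lemma iE_add: "iE l (f + g) = iE l f + iE l g"
  by (simp add: iE_def fun_eq_iff sum.distrib distrib_left)

lemma iE_scale: "iE l (form_scale k f) = form_scale k (iE l f)"
  by (simp add: iE_def fun_eq_iff form_scale_def sum_distrib_left algebra_simps)

lemma zm_add: "zm (f + g) = zm f + zm g"
  by (simp add: zm_def fun_eq_iff distrib_left)

lemma zm_scale: "zm (form_scale k f) = form_scale k (zm f)"
  by (simp add: zm_def fun_eq_iff form_scale_def algebra_simps)

lemma zm_inj: "zm f = zm g \<Longrightarrow> f = (g :: 'a::idom fam)"
  by (simp add: zm_def fun_eq_iff)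

lemma iE_zm: "iE l (zm f) = zm (iE l f)"
  by (simp add: iE_def zm_def fun_eq_iff sum_distrib_left algebra_simps)

locale arr =
  fixes l :: nat and A :: "(nat \<Rightarrow> 'a::field_char_0) set" and h :: "nat \<Rightarrow> 'a" and c :: 'a
  assumes car: "central_arrangement l A" and hA: "h \<in> A" and c0: "c \<noteq> 0"
    and hdef: "h = (\<lambda>i. if i = 0 then c else 0)"
begin

abbreviation z1 :: "'a mpoly" where "z1 \<equiv> var_poly 0"
abbreviation Om where "Om p N \<equiv> OmegaA_deg l A p N"

lemma finA: "finite A" using car by (simp add: central_arrangement_def)

lemma lpos: "0 < l"
proof (rule ccontr)
  assume "\<not> 0 < l" then have "l = 0" by simp
  then have "h 0 = 0" using car hA by (auto simp: central_arrangement_def)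
  then show False using c0 hdef by simp
qed

lemma lform_hh: "lform l h = C c * z1"
  using lform_h[OF lpos, of c] hdef by simp

lemma Cc0: "C c \<noteq> (0 :: 'a mpoly)" using c0 const_poly_inj[of c 0] by simp

lemma other_coord:
  assumes "a \<in> A" "a \<noteq> h" shows "\<exists>i0\<in>{1..<l}. a i0 \<noteq> 0"
proof (rule ccontr)
  assume "\<not> ?thesis"
  then have z: "\<And>i. 1 \<le> i \<Longrightarrow> i < l \<Longrightarrow> a i = 0" by auto
  have big: "\<And>i. l \<le> i \<Longrightarrow> a i = 0" using car assms(1) by (auto simp: central_arrangement_def)
  have "a = (\<lambda>i. (a 0 / c) * h i)"
  proof
    fix i show "a i = a 0 / c * h i"
    proof (cases "i = 0")
      case True then show ?thesis using c0 by (simp add: hdef)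
    next
      case False then show ?thesis using z[of i] big[of i] by (cases "i < l") (auto simp: hdef)
    qed
  qed
  then have "h = a" using car hA assms(1) unfolding central_arrangement_def by blast
  then show False using assms(2) by simp
qed

lemma cop: "a \<in> A \<Longrightarrow> a \<noteq> h \<Longrightarrow> lform l a dvd z1 * X \<Longrightarrow> lform l a dvd X"
  using other_coord coprime_lform[OF lpos] by blast

lemma sg0: "sg J 0 = 1" by (simp add: sg_def)

lemma dwedge_h:
  assumes "finite J"
  shows "dwedge_coeff h f J = (if 0 \<in> J then C c * f (J - {0}) else 0)"
proof -
  have "dwedge_coeff h f J = (\<Sum>j\<in>J. if j = 0 then C c * f (J - {0}) else 0)"
    unfolding dwedge_sg by (rule sum.cong) (auto simp: hdef sg0)
  also have "\<dots> = (if 0 \<in> J then C c * f (J - {0}) else 0)"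
    using assms by (simp add: sum.delta')
  finally show ?thesis .
qed

lemma Om_supp: "f \<in> Om p N \<Longrightarrow> f I \<noteq> 0 \<Longrightarrow> I \<subseteq> {..<l} \<and> card I = p"
  by (simp add: OmegaA_deg_def)
lemma Om_piv: "f \<in> Om p N \<Longrightarrow> poly_in_vars {..<l} (f I)"
  by (simp add: OmegaA_deg_def)
lemma Om_homog: "f \<in> Om p N \<Longrightarrow> homog (N + int (card A)) (f I)"
  by (simp add: OmegaA_deg_def)
lemma Om_dvd: "f \<in> Om p N \<Longrightarrow> a \<in> A \<Longrightarrow> J \<subseteq> {..<l} \<Longrightarrow> card J = Suc p \<Longrightarrow> lform l a dvd dwedge_coeff a f J"
  by (simp add: OmegaA_deg_def)

lemma Ch: assumes f: "f \<in> Om p N" and I: "0 \<notin> I" shows "z1 dvd f I"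
proof (cases "f I = 0")
  case True then show ?thesis by simp
next
  case False
  then have I2: "I \<subseteq> {..<l}" "card I = p" using Om_supp[OF f] by auto
  then have finI: "finite I" using finite_subset by blast
  let ?J = "insert 0 I"
  have J: "?J \<subseteq> {..<l}" "card ?J = Suc p" using I2 I finI lpos by auto
  have "lform l h dvd dwedge_coeff h f ?J" by (rule Om_dvd[OF f hA J])
  also have "dwedge_coeff h f ?J = C c * f I" using finI I by (simp add: dwedge_h)
  finally have "C c * z1 dvd C c * f I" by (simp add: lform_hh)
  then show ?thesis using Cc0 by simp
qed

lemma OmI:
  assumes supp: "\<And>I. f I \<noteq> 0 \<Longrightarrow> I \<subseteq> {..<l} \<and> card I = p"
    and piv: "\<And>I. poly_in_vars {..<l} (f I)"
    and hom: "\<And>I. homog (N + int (card A)) (f I)"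
    and dv: "\<And>a J. a \<in> A \<Longrightarrow> a \<noteq> h \<Longrightarrow> J \<subseteq> {..<l} \<Longrightarrow> card J = Suc p \<Longrightarrow> lform l a dvd dwedge_coeff a f J"
    and ch: "\<And>I. 0 \<notin> I \<Longrightarrow> z1 dvd f I"
  shows "f \<in> Om p N"
proof -
  have "lform l h dvd dwedge_coeff h f J" if J: "J \<subseteq> {..<l}" for J
  proof -
    have finJ: "finite J" using J finite_subset by blast
    show ?thesis
    proof (cases "0 \<in> J")
      case True
      have "z1 dvd f (J - {0})" by (rule ch) simp
      then have "C c * z1 dvd C c * f (J - {0})" by simp
      then show ?thesis using True finJ by (simp add: dwedge_h lform_hh)
    next
      case False then show ?thesis using finJ by (simp add: dwedge_h)
    qed
  qed
  then show ?thesis using supp piv hom dv unfolding OmegaA_deg_def by blast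
qed

lemma Om_subspace: "FS.subspace (Om p N)"
proof (rule FS.subspaceI)
  show "0 \<in> Om p N"
    by (simp add: OmegaA_deg_def zero_fun_def dwedge_zero[unfolded zero_fun_def])
next
  fix f g assume f: "f \<in> Om p N" and g: "g \<in> Om p N"
  show "f + g \<in> Om p N" unfolding OmegaA_deg_def
  proof (intro CollectI conjI allI ballI impI)
    fix I assume "(f + g) I \<noteq> 0"
    then have "f I \<noteq> 0 \<or> g I \<noteq> 0" by auto
    then show "I \<subseteq> {..<l}" "card I = p" using Om_supp[OF f, of I] Om_supp[OF g, of I] by auto
  next
    fix I
    show "poly_in_vars {..<l} ((f + g) I)" using Om_piv[OF f] Om_piv[OF g] by (simp add: piv_add)
    show "homog (N + int (card A)) ((f + g) I)" using Om_homog[OF f] Om_homog[OF g] by (simp add: homog_add)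
  next
    fix a J assume "a \<in> A" "J \<subseteq> {..<l} \<and> card J = Suc p"
    then show "lform l a dvd dwedge_coeff a (f + g) J"
      using Om_dvd[OF f] Om_dvd[OF g] by (simp add: dwedge_add)
  qed
next
  fix k f assume f: "f \<in> Om p N"
  show "form_scale k f \<in> Om p N" unfolding OmegaA_deg_def
  proof (intro CollectI conjI allI ballI impI)
    fix I assume "form_scale k f I \<noteq> 0"
    then have "f I \<noteq> 0" by (auto simp: form_scale_def)
    then show "I \<subseteq> {..<l}" "card I = p" using Om_supp[OF f] by auto
  next
    fix I
    show "poly_in_vars {..<l} (form_scale k f I)" using Om_piv[OF f] by (simp add: form_scale_def piv_const_mult)
    show "homog (N + int (card A)) (form_scale k f I)" using Om_homog[OF f] by (simp add: form_scale_def homog_const_mult)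
  next
    fix a J assume "a \<in> A" "J \<subseteq> {..<l} \<and> card J = Suc p"
    then show "lform l a dvd dwedge_coeff a (form_scale k f) J"
      using Om_dvd[OF f] by (simp add: dwedge_scale)
  qed
qed

lemma Om_fin: "\<exists>T. finite T \<and> Om p N \<subseteq> FS.span T"
proof -
  have "Om p N \<subseteq> ambient l (N + int (card A))"
    by (auto simp: ambient_def dest: Om_supp Om_piv Om_homog)
  then show ?thesis using ambient_span[of l "N + int (card A)"] by blast
qed

lemma res_eq: assumes f: "f \<in> Om p N" shows "res_H h l f = resf c f"
proof
  fix I
  show "res_H h l f I = resf c f I"
  proof (cases "0 \<in> I")
    case True then show ?thesis by (simp add: res_H_def resf_def)
  next
    case False
    have d: "f I = z1 * shiftH (f I)" using z1_shiftH[OF Ch[OF f False]] by simp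
    have "f I = (C c * z1) * (C (1 / c) * shiftH (f I))"
      using c0 by (subst d) (simp add: algebra_simps const_poly_mult[symmetric])
    then have "poly_quot (f I) (lform l h) = C (1 / c) * shiftH (f I)"
      using Cc0 by (intro poly_quot_eq) (simp_all add: lform_hh)
    then show ?thesis using False by (simp add: res_H_def resf_def restrict_H_const_mult)
  qed
qed

lemma M_eq: "M_deg l A h p N = resf c ` Om p N"
  unfolding M_deg_def using res_eq by (auto intro: image_cong)

end

context arr begin

lemma resf_I: "0 \<notin> I \<Longrightarrow> resf c f I = C (1 / c) * restrict_H (shiftH (f I))"
  by (simp add: resf_def)

lemma C1c: "C (1 / c) \<noteq> (0 :: 'a mpoly)" using c0 const_poly_inj[of "1/c" 0] by simp

lemma resf_zero_iff: "0 \<notin> I \<Longrightarrow> resf c f I = 0 \<longleftrightarrow> z1 dvd shiftH (f I)"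
  using C1c by (simp add: resf_I z1_dvd_iff)

lemma zm_Om: assumes f: "f \<in> Om p (N - 1)" shows "zm f \<in> Om p N"
  unfolding OmegaA_deg_def
proof (intro CollectI conjI allI ballI impI)
  fix I assume "zm f I \<noteq> 0"
  then have "f I \<noteq> 0" by (auto simp: zm_def)
  then show "I \<subseteq> {..<l}" "card I = p" using Om_supp[OF f] by auto
next
  fix I
  show "poly_in_vars {..<l} (zm f I)" using Om_piv[OF f] lpos by (simp add: zm_def piv_mult piv_var)
  have "homog (N - 1 + int (card A) + 1) (zm f I)" unfolding zm_def by (rule homog_var_mult[OF Om_homog[OF f]])
  then show "homog (N + int (card A)) (zm f I)" by simp
next
  fix a J assume "a \<in> A" "J \<subseteq> {..<l} \<and> card J = Suc p"
  then show "lform l a dvd dwedge_coeff a (zm f) J"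
    using Om_dvd[OF f] by (simp add: zm_def dwedge_mult_left)
qed

lemma kernel_iff:
  assumes f: "f \<in> Om p N"
  shows "(resf c f = 0 \<and> resf c (iE l f) = 0) \<longleftrightarrow> f \<in> zm ` Om p (N - 1)"
proof
  assume a: "resf c f = 0 \<and> resf c (iE l f) = 0"
  have sq: "z1 * z1 dvd f I" if I: "0 \<notin> I" for I
  proof -
    have "z1 dvd shiftH (f I)" using a I resf_zero_iff[OF I, of f] by (metis zero_fun_def)
    then obtain s where "shiftH (f I) = z1 * s" by (auto elim: dvdE)
    moreover have "f I = z1 * shiftH (f I)" using z1_shiftH[OF Ch[OF f I]] by simp
    ultimately have "f I = z1 * z1 * s" by (simp add: mult.assoc)
    then show ?thesis by simp
  qed
  have dv: "z1 dvd f I" for I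
  proof (cases "0 \<in> I")
    case False then show ?thesis by (rule Ch[OF f])
  next
    case True
    show ?thesis
    proof (cases "f I = 0")
      case True then show ?thesis by simp
    next
      case False
      define K where "K = I - {0}"
      have K0: "0 \<notin> K" by (simp add: K_def)
      have IK: "insert 0 K = I" using True by (auto simp: K_def)
      have fin: "finite ({..<l} - K)" by simp
      have mem: "0 \<in> {..<l} - K" using lpos K0 by simp
      define rest where "rest = (\<Sum>i\<in>({..<l} - K) - {0}. C (sg K i) * (var_poly i * f (insert i K)))"
      have "iE l f K = C (sg K 0) * (var_poly 0 * f (insert 0 K)) + rest"
        unfolding iE_def rest_def by (rule sum.remove[OF fin mem])
      then have iEK: "iE l f K = z1 * f I + rest" by (simp add: sg0 IK)
      have "z1 * z1 dvd rest" unfolding rest_def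
      proof (rule dvd_sum)
        fix i assume "i \<in> {..<l} - K - {0}"
        then have "0 \<notin> insert i K" using K0 by auto
        then have "z1 * z1 dvd f (insert i K)" by (rule sq)
        then show "z1 * z1 dvd C (sg K i) * (var_poly i * f (insert i K))"
          by (intro dvd_mult)
      qed
      then obtain R where R: "rest = z1 * z1 * R" by (auto elim: dvdE)
      have "iE l f K = z1 * (f I + z1 * R)" using iEK R by (simp add: algebra_simps)
      then have "shiftH (iE l f K) = f I + z1 * R" by simp
      moreover have "z1 dvd shiftH (iE l f K)"
        using a resf_zero_iff[OF K0, of "iE l f"] by (metis zero_fun_def)
      ultimately have "z1 dvd f I + z1 * R" by simp
      moreover have "z1 dvd z1 * R" by simp
      ultimately show ?thesis using dvd_add_left_iff by blast
    qed
  qed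
  define \<eta> where "\<eta> = (\<lambda>I. shiftH (f I))"
  have feq: "f = zm \<eta>" using dv by (simp add: zm_def \<eta>_def fun_eq_iff z1_shiftH)
  have fI: "f I = z1 * \<eta> I" for I using feq by (simp add: zm_def)
  have "\<eta> \<in> Om p (N - 1)"
  proof (rule OmI)
    fix I assume "\<eta> I \<noteq> 0"
    then have "f I \<noteq> 0" by (auto simp: \<eta>_def)
    then show "I \<subseteq> {..<l} \<and> card I = p" using Om_supp[OF f] by auto
  next
    fix I
    show "poly_in_vars {..<l} (\<eta> I)" using Om_piv[OF f, of I] fI[of I] by (metis piv_z1_quot)
    have "homog (N + int (card A) - 1) (\<eta> I)" using Om_homog[OF f, of I] fI[of I] by (metis homog_z1_quot)
    then show "homog (N - 1 + int (card A)) (\<eta> I)" by (simp add: algebra_simps)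
  next
    fix a J assume aJ: "a \<in> A" "a \<noteq> h" "J \<subseteq> {..<l}" "card J = Suc p"
    have "lform l a dvd dwedge_coeff a f J" by (rule Om_dvd[OF f aJ(1,3,4)])
    also have "dwedge_coeff a f J = z1 * dwedge_coeff a \<eta> J"
      using feq by (simp add: zm_def dwedge_mult_left)
    finally show "lform l a dvd dwedge_coeff a \<eta> J" using cop aJ by blast
  next
    fix I :: "nat set" assume I: "0 \<notin> I"
    have "z1 * z1 dvd z1 * \<eta> I" using sq[OF I] fI[of I] by simp
    then show "z1 dvd \<eta> I" by simp
  qed
  then show "f \<in> zm ` Om p (N - 1)" using feq by blast
next
  assume "f \<in> zm ` Om p (N - 1)"
  then obtain \<eta> where \<eta>: "\<eta> \<in> Om p (N - 1)" "f = zm \<eta>" by auto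
  have r1: "resf c f = 0"
  proof
    fix I show "resf c f I = (0 :: 'a fam) I"
    proof (cases "0 \<in> I")
      case True then show ?thesis by (simp add: resf_def)
    next
      case False
      then show ?thesis using Ch[OF \<eta>(1) False] \<eta>(2) by (simp add: resf_zero_iff zm_def)
    qed
  qed
  have r2: "resf c (iE l f) = 0"
  proof
    fix I show "resf c (iE l f) I = (0 :: 'a fam) I"
    proof (cases "0 \<in> I")
      case True then show ?thesis by (simp add: resf_def)
    next
      case False
      have "z1 dvd iE l \<eta> I" unfolding iE_def
      proof (rule dvd_sum)
        fix i assume i: "i \<in> {..<l} - I"
        show "z1 dvd C (sg I i) * (var_poly i * \<eta> (insert i I))"
        proof (cases "i = 0")
          case True then show ?thesis by simp
        next
          case False
          then have "0 \<notin> insert i I" using \<open>0 \<notin> I\<close> by simp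
          then have "z1 dvd \<eta> (insert i I)" by (rule Ch[OF \<eta>(1)])
          then show ?thesis by (intro dvd_mult)
        qed
      qed
      moreover have "iE l f I = z1 * iE l \<eta> I" using \<eta>(2) iE_zm[of l \<eta>] by (simp add: zm_def)
      ultimately show ?thesis using False by (simp add: resf_zero_iff)
    qed
  qed
  show "resf c f = 0 \<and> resf c (iE l f) = 0" using r1 r2 by simp
qed

end

context arr begin

lemma iE_nonzero:
  assumes "iE l f K \<noteq> 0" shows "\<exists>i\<in>{..<l} - K. f (insert i K) \<noteq> 0"
proof (rule ccontr)
  assume "\<not> ?thesis"
  then have "iE l f K = 0" unfolding iE_def by (intro sum.neutral) auto
  then show False using assms by simp
qed

lemma iE_Om:
  assumes p: "1 \<le> p" and f: "f \<in> Om p N"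
  shows "iE l f \<in> Om (p - 1) (N + 1)"
  unfolding OmegaA_deg_def
proof (intro CollectI conjI allI ballI impI)
  fix K assume "iE l f K \<noteq> 0"
  then obtain i where i: "i \<in> {..<l} - K" "f (insert i K) \<noteq> 0" using iE_nonzero by blast
  have s: "insert i K \<subseteq> {..<l}" "card (insert i K) = p" using Om_supp[OF f i(2)] by auto
  then show K: "K \<subseteq> {..<l}" by simp
  have "finite K" using finite_subset[OF K finite_lessThan] .
  then show "card K = p - 1" using s(2) i(1) by simp
next
  fix K
  show "poly_in_vars {..<l} (iE l f K)" unfolding iE_def
    by (intro piv_sum piv_const_mult piv_mult piv_var Om_piv[OF f]) auto
  have "homog (N + int (card A) + 1) (iE l f K)" unfolding iE_def
    by (intro homog_sum homog_const_mult homog_var_mult Om_homog[OF f])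
  then show "homog (N + 1 + int (card (A))) (iE l f K)" by (simp add: algebra_simps)
next
  fix a J assume a: "a \<in> A" and J: "J \<subseteq> {..<l} \<and> card J = Suc (p - 1)"
  have finJ: "finite J" using J finite_subset[OF _ finite_lessThan] by blast
  have "lform l a dvd lform l a * f J - iE l (dwedge_coeff a f) J"
  proof (rule dvd_diff)
    show "lform l a dvd lform l a * f J" by simp
    show "lform l a dvd iE l (dwedge_coeff a f) J" unfolding iE_def
    proof (rule dvd_sum)
      fix i assume i: "i \<in> {..<l} - J"
      have "insert i J \<subseteq> {..<l}" "card (insert i J) = Suc p" using i J finJ p by auto
      then have "lform l a dvd dwedge_coeff a f (insert i J)" by (rule Om_dvd[OF f a])
      then show "lform l a dvd C (sg J i) * (var_poly i * dwedge_coeff a f (insert i J))"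
        by (intro dvd_mult)
    qed
  qed
  then show "lform l a dvd dwedge_coeff a (iE l f) J"
    using iE_dwedge[OF finJ conjunct1[OF J], of a f] by simp
qed

lemma iE_Om0: assumes f: "f \<in> Om 0 N" shows "iE l f = 0"
proof
  fix K show "iE l f K = (0 :: 'a fam) K"
  proof (rule ccontr)
    assume "iE l f K \<noteq> (0 :: 'a fam) K"
    then have "iE l f K \<noteq> 0" by simp
    then obtain i where i: "i \<in> {..<l} - K" "f (insert i K) \<noteq> 0" using iE_nonzero by blast
    have s: "insert i K \<subseteq> {..<l}" "card (insert i K) = 0" using Om_supp[OF f i(2)] by auto
    then have "finite (insert i K)" using finite_subset[OF s(1) finite_lessThan] by blast
    then show False using s(2) by simp
  qed
qed

lemma wH_Om:
  assumes p: "1 \<le> p" and g: "g \<in> Om (p - 1) (N + 1)"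
  shows "wH g \<in> Om p N"
proof (rule OmI)
  fix I assume "wH g I \<noteq> 0"
  then have I: "0 \<in> I" "g (I - {0}) \<noteq> 0" by (auto simp: wH_def split: if_splits)
  have s: "I - {0} \<subseteq> {..<l}" "card (I - {0}) = p - 1" using Om_supp[OF g I(2)] by auto
  then have "I \<subseteq> {..<l}" using lpos I(1) by auto
  moreover have "finite (I - {0})" using finite_subset[OF s(1) finite_lessThan] .
  then have "finite I" by simp
  then have "card I = Suc (card (I - {0}))" using I(1) by (rule card.remove)
  ultimately show "I \<subseteq> {..<l} \<and> card I = p" using s(2) p by simp
next
  fix I
  have gI: "g (I - {0}) = z1 * shiftH (g (I - {0}))" using z1_shiftH[OF Ch[OF g, of "I - {0}"]] by simp
  show "poly_in_vars {..<l} (wH g I)"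
    using Om_piv[OF g, of "I - {0}"] gI by (auto simp: wH_def intro: piv_z1_quot)
  have "homog (N + 1 + int (card A) - 1) (shiftH (g (I - {0})))"
    using Om_homog[OF g, of "I - {0}"] gI by (metis homog_z1_quot)
  then show "homog (N + int (card A)) (wH g I)" by (simp add: wH_def algebra_simps)
next
  fix a J assume a: "a \<in> A" "a \<noteq> h" and J: "J \<subseteq> {..<l}" "card J = Suc p"
  have finJ: "finite J" using J finite_subset[OF _ finite_lessThan] by blast
  show "lform l a dvd dwedge_coeff a (wH g) J"
  proof (cases "0 \<in> J")
    case False
    have "dwedge_coeff a (wH g) J = 0" unfolding dwedge_coeff_def
      by (rule sum.neutral) (use False in \<open>auto simp: wH_def\<close>)
    then show ?thesis by simp
  next
    case True
    define J' where "J' = J - {0}"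
    have J'0: "0 \<notin> J'" by (simp add: J'_def)
    have JJ': "J = insert 0 J'" using True by (auto simp: J'_def)
    have finJ': "finite J'" using finJ by (simp add: J'_def)
    have "dwedge_coeff a (wH g) J = C (sg J 0 * a 0) * wH g (J - {0}) + (\<Sum>j\<in>J'. C (sg J j * a j) * wH g (J - {j}))"
      unfolding dwedge_sg JJ' using finJ' J'0 by (simp add: sum.insert)
    also have "C (sg J 0 * a 0) * wH g (J - {0}) = 0" by (simp add: wH_def)
    finally have d1: "dwedge_coeff a (wH g) J = (\<Sum>j\<in>J'. C (sg J j * a j) * wH g (J - {j}))" by simp
    have "z1 * dwedge_coeff a (wH g) J = (\<Sum>j\<in>J'. - (C (sg J' j * a j) * g (J' - {j})))"
      unfolding d1 sum_distrib_left
    proof (rule sum.cong[OF refl])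
      fix j assume j: "j \<in> J'"
      then have j0: "j \<noteq> 0" using J'0 by (cases "j = 0") auto
      have "0 \<in> J - {j}" using True j0 by simp
      moreover have "J - {j} - {0} = J' - {j}" by (auto simp: J'_def)
      ultimately have w: "wH g (J - {j}) = shiftH (g (J' - {j}))" by (simp add: wH_def)
      have z: "z1 * shiftH (g (J' - {j})) = g (J' - {j})"
        using z1_shiftH[OF Ch[OF g, of "J' - {j}"]] J'0 by simp
      have "card {k\<in>insert 0 J'. k < j} = card {k\<in>J'. k < j} + (if 0 < j then 1 else 0)"
        using card_insert_less[OF finJ' J'0] by blast
      then have sgeq: "sg J j = - (sg J' j :: 'a)" using j0 unfolding sg_def JJ' by simp
      have "z1 * (C (sg J j * a j) * wH g (J - {j})) = C (sg J j * a j) * (z1 * shiftH (g (J' - {j})))"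
        using w by (simp add: ac_simps)
      also have "\<dots> = C (sg J j * a j) * g (J' - {j})" using z by simp
      also have "\<dots> = - (C (sg J' j * a j) * g (J' - {j}))" using sgeq by (simp add: const_poly_uminus)
      finally show "z1 * (C (sg J j * a j) * wH g (J - {j})) = - (C (sg J' j * a j) * g (J' - {j}))" .
    qed
    also have "\<dots> = - dwedge_coeff a g J'" by (simp add: dwedge_sg sum_negf)
    finally have e: "z1 * dwedge_coeff a (wH g) J = - dwedge_coeff a g J'" .
    have "J' \<subseteq> {..<l}" "card J' = Suc (p - 1)" using J finJ True p by (auto simp: J'_def)
    then have "lform l a dvd dwedge_coeff a g J'" by (rule Om_dvd[OF g a(1)])
    then have "lform l a dvd z1 * dwedge_coeff a (wH g) J" unfolding e by simp
    then show ?thesis using cop a by blast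
  qed
next
  fix I :: "nat set" assume "0 \<notin> I"
  then show "z1 dvd wH g I" by (simp add: wH_def)
qed

lemma resf_wH: "resf c (wH g) = 0"
  by (simp add: resf_def wH_def fun_eq_iff)

lemma resf_iE_wH:
  assumes g: "g \<in> Om (p - 1) (N + 1)"
  shows "resf c (iE l (wH g)) = resf c g"
proof
  fix K show "resf c (iE l (wH g)) K = resf c g K"
  proof (cases "0 \<in> K")
    case True then show ?thesis by (simp add: resf_def)
  next
    case False
    have "iE l (wH g) K = (\<Sum>i\<in>{..<l} - K. if i = 0 then g K else 0)"
      unfolding iE_def
    proof (rule sum.cong[OF refl])
      fix i assume i: "i \<in> {..<l} - K"
      show "C (sg K i) * (var_poly i * wH g (insert i K)) = (if i = 0 then g K else 0)"
      proof (cases "i = 0")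
        case True
        have "insert 0 K - {0} = K" using False by auto
        then show ?thesis using True z1_shiftH[OF Ch[OF g False]] by (simp add: wH_def sg0)
      next
        case ne: False
        then show ?thesis using False by (simp add: wH_def)
      qed
    qed
    also have "\<dots> = g K" using lpos False by (simp add: sum.delta')
    finally show ?thesis by (simp add: resf_def)
  qed
qed

lemma resf_top: assumes f: "f \<in> Om l N" shows "resf c f = 0"
proof
  fix I show "resf c f I = (0 :: 'a fam) I"
  proof (cases "0 \<in> I")
    case True then show ?thesis by (simp add: resf_def)
  next
    case False
    have "f I = 0"
    proof (rule ccontr)
      assume "f I \<noteq> 0"
      then have "I \<subseteq> {..<l}" "card I = l" using Om_supp[OF f, of I] by auto
      then have "I = {..<l}" by (simp add: card_subset_eq)
      then show False using False lpos by simp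
    qed
    then show ?thesis using False by (simp add: resf_def)
  qed
qed

lemma Om_neg: assumes "N + int (card A) < 0" "f \<in> Om p N" shows "f = 0"
  using homog_neg[OF assms(1) Om_homog[OF assms(2)]] by (simp add: fun_eq_iff)

end

context arr begin

abbreviation dO where "dO p N \<equiv> FS.dim (Om p N)"
abbreviation dM where "dM p N \<equiv> FS.dim (resf c ` Om p N)"

lemma dim_sub0: "V \<subseteq> {0} \<Longrightarrow> FS.dim (V :: 'a fam set) = 0"
  using FS.dim_le_card[of V "{}"] by simp

lemma kern_subspace: "FS.subspace {x \<in> Om p N. resf c x = 0}"
proof (rule FS.subspaceI)
  show "0 \<in> {x \<in> Om p N. resf c x = 0}" using FS.subspace_0[OF Om_subspace] by simp
next
  fix x y assume "x \<in> {x \<in> Om p N. resf c x = 0}" "y \<in> {x \<in> Om p N. resf c x = 0}"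
  then show "x + y \<in> {x \<in> Om p N. resf c x = 0}"
    using FS.subspace_add[OF Om_subspace] by (simp add: resf_add)
next
  fix k x assume x: "x \<in> {x \<in> Om p N. resf c x = 0}"
  have "resf c (form_scale k x) = form_scale k (resf c x)" by (rule resf_scale)
  also have "\<dots> = 0" using x by simp
  finally show "form_scale k x \<in> {x \<in> Om p N. resf c x = 0}"
    using FS.subspace_scale[OF Om_subspace] x by simp
qed

lemma count:
  "dO p N = dM p N + dO p (N - 1) + (if p = 0 then 0 else dM (p - 1) (N + 1))"
proof -
  obtain T where T: "finite T" "Om p N \<subseteq> FS.span T" using Om_fin by blast
  define K where "K = {x \<in> Om p N. resf c x = 0}"
  have KS: "FS.subspace K" unfolding K_def by (rule kern_subspace)
  have KT: "K \<subseteq> FS.span T" using T(2) by (auto simp: K_def)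
  have r1: "dO p N = dM p N + FS.dim K"
    unfolding K_def by (rule FS.rank_nullity_on[OF Om_subspace T]) (simp_all add: resf_add resf_scale)
  have r2: "FS.dim K = FS.dim ((\<lambda>f. resf c (iE l f)) ` K) + FS.dim {x\<in>K. resf c (iE l x) = 0}"
    by (rule FS.rank_nullity_on[OF KS T(1) KT]) (simp_all add: resf_add resf_scale iE_add iE_scale)
  have kerK: "{x\<in>K. resf c (iE l x) = 0} = zm ` Om p (N - 1)"
  proof
    show "{x\<in>K. resf c (iE l x) = 0} \<subseteq> zm ` Om p (N - 1)"
      using kernel_iff by (auto simp: K_def)
  next
    show "zm ` Om p (N - 1) \<subseteq> {x\<in>K. resf c (iE l x) = 0}"
    proof
      fix x assume x: "x \<in> zm ` Om p (N - 1)"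
      then have "x \<in> Om p N" using zm_Om by auto
      then show "x \<in> {x\<in>K. resf c (iE l x) = 0}" using kernel_iff[of x] x by (auto simp: K_def)
    qed
  qed
  obtain T' where T': "finite T'" "Om p (N - 1) \<subseteq> FS.span T'" using Om_fin by blast
  have r3: "dO p (N - 1) = FS.dim (zm ` Om p (N - 1)) + FS.dim {x \<in> Om p (N - 1). zm x = 0}"
    by (rule FS.rank_nullity_on[OF Om_subspace T']) (simp_all add: zm_add zm_scale)
  have "{x \<in> Om p (N - 1). zm x = 0} \<subseteq> {0}"
    using zm_inj[of _ 0] by (auto simp: zm_def zero_fun_def)
  then have r3': "dO p (N - 1) = FS.dim (zm ` Om p (N - 1))" using r3 dim_sub0 by simp
  have r4: "FS.dim ((\<lambda>f. resf c (iE l f)) ` K) = (if p = 0 then 0 else dM (p - 1) (N + 1))"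
  proof (cases "p = 0")
    case True
    have "(\<lambda>f. resf c (iE l f)) ` K \<subseteq> {0}" using True iE_Om0 by (auto simp: K_def)
    then show ?thesis using True dim_sub0 by simp
  next
    case False
    then have p: "1 \<le> p" by simp
    have "(\<lambda>f. resf c (iE l f)) ` K = resf c ` Om (p - 1) (N + 1)"
    proof
      show "(\<lambda>f. resf c (iE l f)) ` K \<subseteq> resf c ` Om (p - 1) (N + 1)"
        using iE_Om[OF p] by (auto simp: K_def)
    next
      show "resf c ` Om (p - 1) (N + 1) \<subseteq> (\<lambda>f. resf c (iE l f)) ` K"
      proof
        fix y assume "y \<in> resf c ` Om (p - 1) (N + 1)"
        then obtain g where g: "g \<in> Om (p - 1) (N + 1)" "y = resf c g" by auto
        have "wH g \<in> K" using wH_Om[OF p g(1)] resf_wH by (simp add: K_def)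
        moreover have "y = resf c (iE l (wH g))" using resf_iE_wH[OF g(1)] g(2) by simp
        ultimately show "y \<in> (\<lambda>f. resf c (iE l f)) ` K" by blast
      qed
    qed
    then show ?thesis using False by simp
  qed
  show ?thesis using r1 r2 kerK r3' r4 by simp
qed

lemma dM_top: "dM l N = 0"
  using resf_top by (intro dim_sub0) auto

lemma dO_neg: "N + int (card A) < 0 \<Longrightarrow> dO p N = 0"
  using Om_neg by (intro dim_sub0) auto

lemma dM_neg: assumes "N + int (card A) < 0" shows "dM p N = 0"
proof (rule dim_sub0)
  show "resf c ` Om p N \<subseteq> {0}"
  proof
    fix y assume "y \<in> resf c ` Om p N"
    then obtain x where x: "x \<in> Om p N" "y = resf c x" by auto
    have "x = 0" by (rule Om_neg[OF assms x(1)])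
    then show "y \<in> {0}" using x(2) by simp
  qed
qed

end

lemma hs_nth:
  assumes "\<And>n. n < n0 \<Longrightarrow> d n = 0"
  shows "fls_nth (hilbert_series d) n = int (d n)"
  unfolding hilbert_series_def
proof (rule nth_Abs_fls_ex_nat_lower_bound)
  show "\<exists>m. \<forall>k>m. int (d (- int k)) = 0"
    by (rule exI[of _ "nat (- n0)"]) (auto intro!: assms)
qed

lemma X_nth: "fls_nth (fls_X * F) n = fls_nth F (n - 1)"
  for F :: "int fls"
  by (simp add: fls_X_times_conv_shift)

context arr begin

lemma HO_nth: "fls_nth (hilbert_series (\<lambda>n. dO p n)) n = int (dO p n)"
  by (rule hs_nth[of "- int (card A)"]) (simp add: dO_neg)

lemma HM_nth: "fls_nth (hilbert_series (\<lambda>n. dM p n)) n = int (dM p n)"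
  by (rule hs_nth[of "- int (card A)"]) (simp add: dM_neg)

lemma main:
  "[:fls_X, 1:] * (\<Sum>p<l. monom (hilbert_series (\<lambda>n. dimK (M_deg l A h p n))) p)
     = smult (fls_X * (1 - fls_X)) (\<Sum>p\<le>l. monom (hilbert_series (\<lambda>n. dimK (OmegaA_deg l A p n))) p)"
proof -
  define HM where "HM p = hilbert_series (\<lambda>n. dM p n)" for p
  define HO where "HO p = hilbert_series (\<lambda>n. dO p n)" for p
  have eM: "(\<lambda>n. dimK (M_deg l A h p n)) = (\<lambda>n. dM p n)" for p by (simp add: dimK_eq M_eq)
  have eO: "(\<lambda>n. dimK (OmegaA_deg l A p n)) = (\<lambda>n. dO p n)" for p by (simp add: dimK_eq)
  define P where "P = (\<Sum>p<l. monom (HM p) p)"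
  define Q where "Q = (\<Sum>p\<le>l. monom (HO p) p)"
  have cP: "coeff P k = (if k < l then HM k else 0)" for k
    by (simp add: P_def coeff_sum)
  have cQ: "coeff Q k = (if k \<le> l then HO k else 0)" for k
    by (simp add: Q_def coeff_sum)
  have "[:fls_X, 1:] * P = smult (fls_X * (1 - fls_X)) Q"
  proof (rule poly_eqI)
    fix k
    have L: "coeff ([:fls_X, 1:] * P) k = fls_X * coeff P k + (case k of 0 \<Rightarrow> 0 | Suc m \<Rightarrow> coeff P m)"
      by (simp add: coeff_pCons)
    have R: "coeff (smult (fls_X * (1 - fls_X)) Q) k = fls_X * coeff Q k - fls_X * (fls_X * coeff Q k)"
      by (simp add: algebra_simps)
    show "coeff ([:fls_X, 1:] * P) k = coeff (smult (fls_X * (1 - fls_X)) Q) k"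
      unfolding L R
    proof (cases k)
      case 0
      show "fls_X * coeff P k + (case k of 0 \<Rightarrow> 0 | Suc m \<Rightarrow> coeff P m) = fls_X * coeff Q k - fls_X * (fls_X * coeff Q k)"
      proof (rule fls_eqI)
        fix n
        have c: "dO 0 (n - 1) = dM 0 (n - 1) + dO 0 (n - 1 - 1)" using count[of 0 "n - 1"] by simp
        show "fls_nth (fls_X * coeff P k + (case k of 0 \<Rightarrow> 0 | Suc m \<Rightarrow> coeff P m)) n = fls_nth (fls_X * coeff Q k - fls_X * (fls_X * coeff Q k)) n"
          using 0 lpos c by (simp add: cP cQ X_nth HM_def HO_def HM_nth HO_nth)
      qed
    next
      case (Suc k')
      show "fls_X * coeff P k + (case k of 0 \<Rightarrow> 0 | Suc m \<Rightarrow> coeff P m) = fls_X * coeff Q k - fls_X * (fls_X * coeff Q k)"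
      proof (cases "k \<le> l")
        case False
        then show ?thesis using Suc by (simp add: cP cQ)
      next
        case True
        show ?thesis
        proof (rule fls_eqI)
          fix n
          have c: "dO k (n - 1) = dM k (n - 1) + dO k (n - 1 - 1) + dM k' n"
            using count[of k "n - 1"] Suc by simp
          have t: "k = l \<Longrightarrow> dM k (n - 1) = 0" using dM_top by simp
          show "fls_nth (fls_X * coeff P k + (case k of 0 \<Rightarrow> 0 | Suc m \<Rightarrow> coeff P m)) n = fls_nth (fls_X * coeff Q k - fls_X * (fls_X * coeff Q k)) n"
            using Suc True c t by (auto simp: cP cQ X_nth HM_def HO_def HM_nth HO_nth)
        qed
      qed
    qed
  qed
  then show ?thesis unfolding eM eO P_def Q_def HM_def HO_def .
qed

end

theorem mainTheorem2:
  fixes l :: nat and A :: "(nat \<Rightarrow> 'a::field_char_0) set" and h :: "nat \<Rightarrow> 'a" and c :: 'a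
  assumes "central_arrangement l A"
    and "h \<in> A"
    and "c \<noteq> 0" and "h = (\<lambda>i. if i = 0 then c else 0)"
  shows "[:fls_X, 1:] * (\<Sum>p<l. monom (hilbert_series (\<lambda>n. dimK (M_deg l A h p n))) p)
         = smult (fls_X * (1 - fls_X)) (\<Sum>p\<le>l. monom (hilbert_series (\<lambda>n. dimK (OmegaA_deg l A p n))) p)"
  proof -
  interpret arr l A h c using assms by unfold_locales
  show ?thesis by (rule main)
qed

end
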